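(* Let $a\in\mathrm{Im}(\mathbb{H})$ and $b\in\mathbb{H}$ have norm one. Then the three algebras $\mathbb{H}\times\mathbb{H}_{(T_{a,\bar a}\circ\sigma_{\mathbb{H}},\,I_{\mathbb{H}})}$, $\mathbb{H}\times\mathbb{H}_{(I_{\mathbb{H}},\,-T_{b,b}\circ\sigma_{\mathbb{H}})}$ and ${}^*\mathbb{O}(i,1)$ are mutually isomorphic.
   Context: For $a,b\in\mathbb{H}$, $T_{a,b}(x)=axb$; $\sigma_{\mathbb{H}}(x)=\bar x$; $I_{\mathbb{H}}$ is the identity. $\mathbb{O}=\mathbb{H}\times\mathbb{H}$ with Cayley–Dickson product $(x,y)\bullet(u,v)=(xu-\bar v y,\ y\bar u+vx)$, conjugation $\overline{(x,y)}=(\bar x,-y)$, and $i=(i,0)$. For linear maps $f,g$ of $\mathbb{H}$, $\mathbb{H}\times\mathbb{H}_{(f,g)}$ is $\mathbb{H}\times\mathbb{H}$ with product $(x,y)\odot(u,v)=(f(x),g(y))\bullet(u,v)$. ${}^*\mathbb{O}(i,1)$ is $\mathbb{O}$ with product $x\odot y=(\bar x i)y$. *)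

theory Defs
  imports "HOL-Analysis.Analysis"
begin

datatype quat = Quat (qr: real) (qi: real) (qj: real) (qk: real)

instantiation quat :: ab_group_add
begin
definition "0 = Quat 0 0 0 0"
definition "x + y = Quat (qr x + qr y) (qi x + qi y) (qj x + qj y) (qk x + qk y)"
definition "- x = Quat (- qr x) (- qi x) (- qj x) (- qk x)"
definition "x - y = Quat (qr x - qr y) (qi x - qi y) (qj x - qj y) (qk x - qk y)"
instance
  by standard (auto simp: zero_quat_def plus_quat_def uminus_quat_def minus_quat_def)
end

instantiation quat :: real_vector
begin
definition "scaleR r x = Quat (r * qr x) (r * qi x) (r * qj x) (r * qk x)"
instance
  by standard (auto simp: scaleR_quat_def plus_quat_def algebra_simps)
end

definition qmult :: "quat \<Rightarrow> quat \<Rightarrow> quat" (infixl "\<cdot>\<^sub>q" 70) where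
  "x \<cdot>\<^sub>q y = Quat
     (qr x * qr y - qi x * qi y - qj x * qj y - qk x * qk y)
     (qr x * qi y + qi x * qr y + qj x * qk y - qk x * qj y)
     (qr x * qj y - qi x * qk y + qj x * qr y + qk x * qi y)
     (qr x * qk y + qi x * qj y - qj x * qi y + qk x * qr y)"

definition qcnj :: "quat \<Rightarrow> quat" where
  "qcnj x = Quat (qr x) (- qi x) (- qj x) (- qk x)"

definition qnorm :: "quat \<Rightarrow> real" where
  "qnorm x = sqrt ((qr x)\<^sup>2 + (qi x)\<^sup>2 + (qj x)\<^sup>2 + (qk x)\<^sup>2)"

definition qImag :: "quat set" where
  "qImag = {x. qr x = 0}"

definition qunit_i :: quat where "qunit_i = Quat 0 1 0 0"

definition qT :: "quat \<Rightarrow> quat \<Rightarrow> quat \<Rightarrow> quat" where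
  "qT a b x = a \<cdot>\<^sub>q x \<cdot>\<^sub>q b"

section \<open>Octonions via Cayley--Dickson on H \<times> H\<close>

type_synonym oct = "quat \<times> quat"

definition omult :: "oct \<Rightarrow> oct \<Rightarrow> oct" (infixl "\<bullet>\<^sub>O" 70) where
  "p \<bullet>\<^sub>O q = (case p of (x, y) \<Rightarrow> case q of (u, v) \<Rightarrow>
      (x \<cdot>\<^sub>q u - qcnj v \<cdot>\<^sub>q y, y \<cdot>\<^sub>q qcnj u + v \<cdot>\<^sub>q x))"

definition ocnj :: "oct \<Rightarrow> oct" where
  "ocnj p = (case p of (x, y) \<Rightarrow> (qcnj x, - y))"

definition ounit_i :: oct where "ounit_i = (qunit_i, 0)"

text \<open>The algebra H \<times> H_(f,g): product (x,y) \<odot> (u,v) = (f x, g y) \<bullet> (u,v).\<close>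
definition HH_mult :: "(quat \<Rightarrow> quat) \<Rightarrow> (quat \<Rightarrow> quat) \<Rightarrow> oct \<Rightarrow> oct \<Rightarrow> oct" where
  "HH_mult f g p q = (case p of (x, y) \<Rightarrow> (f x, g y) \<bullet>\<^sub>O q)"

text \<open>The algebra *O(i,1): product x \<odot> y = (conj(x) i) y.\<close>
definition starO_mult :: "oct \<Rightarrow> oct \<Rightarrow> oct" where
  "starO_mult x y = (ocnj x \<bullet>\<^sub>O ounit_i) \<bullet>\<^sub>O y"

text \<open>Isomorphism of real algebras sharing the underlying vector space H \<times> H:
  a real-linear bijection intertwining the two products.\<close>
definition alg_iso :: "(oct \<Rightarrow> oct \<Rightarrow> oct) \<Rightarrow> (oct \<Rightarrow> oct \<Rightarrow> oct) \<Rightarrow> (oct \<Rightarrow> oct) \<Rightarrow> bool" where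
  "alg_iso m1 m2 \<phi> \<longleftrightarrow> linear \<phi> \<and> bij \<phi> \<and> (\<forall>p q. \<phi> (m1 p q) = m2 (\<phi> p) (\<phi> q))"

definition alg_isomorphic :: "(oct \<Rightarrow> oct \<Rightarrow> oct) \<Rightarrow> (oct \<Rightarrow> oct \<Rightarrow> oct) \<Rightarrow> bool" where
  "alg_isomorphic m1 m2 \<longleftrightarrow> (\<exists>\<phi>. alg_iso m1 m2 \<phi>)"

end

theory Submission
  imports Defs
begin

lemma quat_eqI: "qr x = qr y \<Longrightarrow> qi x = qi y \<Longrightarrow> qj x = qj y \<Longrightarrow> qk x = qk y \<Longrightarrow> x = y"
  by (cases x; cases y) auto

lemma quat_simps [simp]:
  "qr 0 = 0" "qi 0 = 0" "qj 0 = 0" "qk 0 = 0"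
  "qr (x + y) = qr x + qr y" "qi (x + y) = qi x + qi y" "qj (x + y) = qj x + qj y" "qk (x + y) = qk x + qk y"
  "qr (x - y) = qr x - qr y" "qi (x - y) = qi x - qi y" "qj (x - y) = qj x - qj y" "qk (x - y) = qk x - qk y"
  "qr (- x) = - qr x" "qi (- x) = - qi x" "qj (- x) = - qj x" "qk (- x) = - qk x"
  "qr (c *\<^sub>R x) = c * qr x" "qi (c *\<^sub>R x) = c * qi x" "qj (c *\<^sub>R x) = c * qj x" "qk (c *\<^sub>R x) = c * qk x"
  "qr (x \<cdot>\<^sub>q y) = qr x * qr y - qi x * qi y - qj x * qj y - qk x * qk y"
  "qi (x \<cdot>\<^sub>q y) = qr x * qi y + qi x * qr y + qj x * qk y - qk x * qj y"
  "qj (x \<cdot>\<^sub>q y) = qr x * qj y - qi x * qk y + qj x * qr y + qk x * qi y"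
  "qk (x \<cdot>\<^sub>q y) = qr x * qk y + qi x * qj y - qj x * qi y + qk x * qr y"
  "qr (qcnj x) = qr x" "qi (qcnj x) = - qi x" "qj (qcnj x) = - qj x" "qk (qcnj x) = - qk x"
  by (simp_all add: zero_quat_def plus_quat_def minus_quat_def uminus_quat_def scaleR_quat_def qmult_def qcnj_def)

definition qone :: quat where "qone = Quat 1 0 0 0"

lemma qone_simps [simp]: "qr qone = 1" "qi qone = 0" "qj qone = 0" "qk qone = 0"
  by (simp_all add: qone_def)

lemma qassoc: "(x \<cdot>\<^sub>q y) \<cdot>\<^sub>q z = x \<cdot>\<^sub>q (y \<cdot>\<^sub>q z)"
  by (rule quat_eqI) (simp_all add: algebra_simps)
lemma qdistL: "x \<cdot>\<^sub>q (y + z) = x \<cdot>\<^sub>q y + x \<cdot>\<^sub>q z"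
  by (rule quat_eqI) (simp_all add: algebra_simps)
lemma qdistR: "(y + z) \<cdot>\<^sub>q x = y \<cdot>\<^sub>q x + z \<cdot>\<^sub>q x"
  by (rule quat_eqI) (simp_all add: algebra_simps)
lemma qdistL': "x \<cdot>\<^sub>q (y - z) = x \<cdot>\<^sub>q y - x \<cdot>\<^sub>q z"
  by (rule quat_eqI) (simp_all add: algebra_simps)
lemma qdistR': "(y - z) \<cdot>\<^sub>q x = y \<cdot>\<^sub>q x - z \<cdot>\<^sub>q x"
  by (rule quat_eqI) (simp_all add: algebra_simps)
lemma qnegL: "(- y) \<cdot>\<^sub>q x = - (y \<cdot>\<^sub>q x)"
  by (rule quat_eqI) (simp_all add: algebra_simps)
lemma qnegR: "x \<cdot>\<^sub>q (- y) = - (x \<cdot>\<^sub>q y)"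
  by (rule quat_eqI) (simp_all add: algebra_simps)
lemma qone_L: "qone \<cdot>\<^sub>q x = x" by (rule quat_eqI) simp_all
lemma qone_R: "x \<cdot>\<^sub>q qone = x" by (rule quat_eqI) simp_all
lemma qcnj_mult: "qcnj (x \<cdot>\<^sub>q y) = qcnj y \<cdot>\<^sub>q qcnj x"
  by (rule quat_eqI) (simp_all add: algebra_simps)
lemma qcnj_cnj: "qcnj (qcnj x) = x" by (rule quat_eqI) simp_all
lemma qcnj_neg: "qcnj (- x) = - qcnj x" by (rule quat_eqI) simp_all

lemma qunit:
  assumes "qnorm p = 1"
  shows "p \<cdot>\<^sub>q qcnj p = qone" "qcnj p \<cdot>\<^sub>q p = qone"
proof -
  have "(qr p)\<^sup>2 + (qi p)\<^sup>2 + (qj p)\<^sup>2 + (qk p)\<^sup>2 = 1"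
    using assms unfolding qnorm_def by (simp add: real_sqrt_eq_1_iff)
  then show "p \<cdot>\<^sub>q qcnj p = qone" "qcnj p \<cdot>\<^sub>q p = qone"
    by (auto intro!: quat_eqI simp: algebra_simps power2_eq_square)
qed

lemma omult_pair: "(x, y) \<bullet>\<^sub>O (u, v) = (x \<cdot>\<^sub>q u - qcnj v \<cdot>\<^sub>q y, y \<cdot>\<^sub>q qcnj u + v \<cdot>\<^sub>q x)"
  by (simp add: omult_def)

lemma HH_pair: "HH_mult f g (x, y) q = (f x, g y) \<bullet>\<^sub>O q"
  by (simp add: HH_mult_def)

lemma alg_iso_sym:
  assumes "alg_iso m1 m2 \<phi>" shows "alg_iso m2 m1 (inv \<phi>)"
proof -
  have l: "linear \<phi>" and b: "bij \<phi>" and h: "\<And>p q. \<phi> (m1 p q) = m2 (\<phi> p) (\<phi> q)"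
    using assms unfolding alg_iso_def by auto
  have fi: "\<phi> (inv \<phi> x) = x" for x using b by (simp add: bij_is_surj surj_f_inv_f)
  have if': "inv \<phi> (\<phi> x) = x" for x using b by (simp add: bij_is_inj)
  have "linear (inv \<phi>)"
  proof (rule linearI)
    fix x y
    have "\<phi> (inv \<phi> x + inv \<phi> y) = x + y" using l fi by (simp add: linear_add)
    then show "inv \<phi> (x + y) = inv \<phi> x + inv \<phi> y" by (metis if')
  next
    fix r x
    have "\<phi> (r *\<^sub>R inv \<phi> x) = r *\<^sub>R x" using l fi by (simp add: linear_scale)
    then show "inv \<phi> (r *\<^sub>R x) = r *\<^sub>R inv \<phi> x" by (metis if')
  qed
  moreover have "bij (inv \<phi>)" using b by (simp add: bij_imp_bij_inv)
  moreover have "inv \<phi> (m2 p q) = m1 (inv \<phi> p) (inv \<phi> q)" for p q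
    by (metis h fi if')
  ultimately show ?thesis unfolding alg_iso_def by auto
qed

lemma alg_iso_trans:
  assumes "alg_iso m1 m2 \<phi>" "alg_iso m2 m3 \<psi>" shows "alg_iso m1 m3 (\<psi> \<circ> \<phi>)"
  using assms unfolding alg_iso_def by (simp add: linear_compose bij_comp del: split_paired_All)

lemma isomorphic_sym: "alg_isomorphic m1 m2 \<Longrightarrow> alg_isomorphic m2 m1"
  unfolding alg_isomorphic_def using alg_iso_sym by blast
lemma isomorphic_trans: "alg_isomorphic m1 m2 \<Longrightarrow> alg_isomorphic m2 m3 \<Longrightarrow> alg_isomorphic m1 m3"
  unfolding alg_isomorphic_def using alg_iso_trans by blast

lemma auto_iso:
  fixes \<theta> :: "oct \<Rightarrow> oct" and f g f' g' :: "quat \<Rightarrow> quat"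
  assumes "linear \<theta>" "bij \<theta>" "\<And>z w. \<theta> (z \<bullet>\<^sub>O w) = \<theta> z \<bullet>\<^sub>O \<theta> w"
    "\<And>x y. \<theta> (f x, g y) = (f' (fst (\<theta> (x, y))), g' (snd (\<theta> (x, y))))"
  shows "alg_isomorphic (HH_mult f g) (HH_mult f' g')"
  unfolding alg_isomorphic_def alg_iso_def
proof (intro exI conjI allI)
  fix p q
  obtain x y :: quat where p: "p = (x, y)" by (cases p)
  obtain x' y' where t: "\<theta> (x, y) = (x', y')" by (cases "\<theta> (x, y)")
  show "\<theta> (HH_mult f g p q) = HH_mult f' g' (\<theta> p) (\<theta> q)"
    using assms(3) assms(4)[of x y] t by (simp add: p HH_pair)
qed (use assms in auto)


lemma bijI': "(\<And>x. g (f x) = x) \<Longrightarrow> (\<And>y. f (g y) = y) \<Longrightarrow> bij f"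
  by (rule o_bij[of g]) (auto simp: fun_eq_iff)

lemma qscaleL: "(c *\<^sub>R x) \<cdot>\<^sub>q y = c *\<^sub>R (x \<cdot>\<^sub>q y)"
  by (rule quat_eqI) (simp_all add: algebra_simps)
lemma qscaleR: "x \<cdot>\<^sub>q (c *\<^sub>R y) = c *\<^sub>R (x \<cdot>\<^sub>q y)"
  by (rule quat_eqI) (simp_all add: algebra_simps)
lemma qcnj_add: "qcnj (x + y) = qcnj x + qcnj y" by (rule quat_eqI) simp_all
lemma qcnj_diff: "qcnj (x - y) = qcnj x - qcnj y" by (rule quat_eqI) simp_all
lemma qcnj_one: "qcnj qone = qone" by (rule quat_eqI) simp_all

lemma qunit2:
  assumes "qnorm p = 1"
  shows "p \<cdot>\<^sub>q (qcnj p \<cdot>\<^sub>q r) = r" "qcnj p \<cdot>\<^sub>q (p \<cdot>\<^sub>q r) = r"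
  by (simp_all add: qassoc[symmetric] qunit[OF assms] qone_L)

lemmas qalg = qassoc qdistL qdistR qdistL' qdistR' qnegL qnegR qone_L qone_R qcnj_mult qcnj_cnj
  qcnj_neg qscaleL qscaleR qcnj_add qcnj_diff qcnj_one

abbreviation "F1 a \<equiv> qT a (qcnj a) \<circ> qcnj"
abbreviation "G2 b \<equiv> (\<lambda>y. - (qT b b \<circ> qcnj) y)"

lemma iso_A3_A1i: "alg_isomorphic starO_mult (HH_mult (F1 qunit_i) id)"
  unfolding alg_isomorphic_def alg_iso_def
proof (intro exI[of _ "\<lambda>(x, y). (- (x \<cdot>\<^sub>q qunit_i), y)"] conjI allI)
  show "linear (\<lambda>(x, y). (- (x \<cdot>\<^sub>q qunit_i), y))"
    by (rule linearI) (auto simp: qalg)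
  show "bij (\<lambda>(x, y). (- (x \<cdot>\<^sub>q qunit_i), y))"
    by (rule bijI'[of "\<lambda>(x, y). (x \<cdot>\<^sub>q qunit_i, y)"]; clarsimp; rule quat_eqI; simp add: qunit_i_def)
  fix p q :: oct
  obtain x y where p: "p = (x, y)" by (cases p)
  obtain u v where q: "q = (u, v)" by (cases q)
  show "(\<lambda>(x, y). (- (x \<cdot>\<^sub>q qunit_i), y)) (starO_mult p q) =
    HH_mult (F1 qunit_i) id ((\<lambda>(x, y). (- (x \<cdot>\<^sub>q qunit_i), y)) p) ((\<lambda>(x, y). (- (x \<cdot>\<^sub>q qunit_i), y)) q)"
    unfolding p q starO_mult_def ocnj_def ounit_i_def HH_mult_def omult_def qT_def
    by (simp; intro conjI quat_eqI; simp add: qunit_i_def algebra_simps)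
qed

lemma iso_A1i_A1a:
  assumes pn: "qnorm p = 1" and a: "a = p \<cdot>\<^sub>q qunit_i \<cdot>\<^sub>q qcnj p"
  shows "alg_isomorphic (HH_mult (F1 qunit_i) id) (HH_mult (F1 a) id)"
proof (rule auto_iso[where \<theta>="\<lambda>(x, y). (p \<cdot>\<^sub>q x \<cdot>\<^sub>q qcnj p, p \<cdot>\<^sub>q y \<cdot>\<^sub>q qcnj p)"])
  show "linear (\<lambda>(x, y). (p \<cdot>\<^sub>q x \<cdot>\<^sub>q qcnj p, p \<cdot>\<^sub>q y \<cdot>\<^sub>q qcnj p))"
    by (rule linearI) (auto simp: qalg)
  show "bij (\<lambda>(x, y). (p \<cdot>\<^sub>q x \<cdot>\<^sub>q qcnj p, p \<cdot>\<^sub>q y \<cdot>\<^sub>q qcnj p))"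
    by (rule bijI'[of "\<lambda>(x, y). (qcnj p \<cdot>\<^sub>q x \<cdot>\<^sub>q p, qcnj p \<cdot>\<^sub>q y \<cdot>\<^sub>q p)"])
      (auto simp: qalg qunit2[OF pn] qunit[OF pn])
  fix z w :: oct
  show "(\<lambda>(x, y). (p \<cdot>\<^sub>q x \<cdot>\<^sub>q qcnj p, p \<cdot>\<^sub>q y \<cdot>\<^sub>q qcnj p)) (z \<bullet>\<^sub>O w) =
    (\<lambda>(x, y). (p \<cdot>\<^sub>q x \<cdot>\<^sub>q qcnj p, p \<cdot>\<^sub>q y \<cdot>\<^sub>q qcnj p)) z \<bullet>\<^sub>O (\<lambda>(x, y). (p \<cdot>\<^sub>q x \<cdot>\<^sub>q qcnj p, p \<cdot>\<^sub>q y \<cdot>\<^sub>q qcnj p)) w"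
    by (cases z; cases w) (simp add: omult_pair qalg qunit2[OF pn] qunit[OF pn])
next
  fix x y :: quat
  show "(\<lambda>(x, y). (p \<cdot>\<^sub>q x \<cdot>\<^sub>q qcnj p, p \<cdot>\<^sub>q y \<cdot>\<^sub>q qcnj p)) (F1 qunit_i x, id y) =
    (F1 a (fst ((\<lambda>(x, y). (p \<cdot>\<^sub>q x \<cdot>\<^sub>q qcnj p, p \<cdot>\<^sub>q y \<cdot>\<^sub>q qcnj p)) (x, y))),
     id (snd ((\<lambda>(x, y). (p \<cdot>\<^sub>q x \<cdot>\<^sub>q qcnj p, p \<cdot>\<^sub>q y \<cdot>\<^sub>q qcnj p)) (x, y))))"
    by (simp add: a qT_def qalg qunit2[OF pn] qunit[OF pn])
qed

lemma iso_A21_A2b: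
  assumes bn: "qnorm b = 1"
  shows "alg_isomorphic (HH_mult id (G2 qone)) (HH_mult id (G2 b))"
proof (rule auto_iso[where \<theta>="\<lambda>(x, y). (x, b \<cdot>\<^sub>q y)"])
  show "linear (\<lambda>(x, y). (x, b \<cdot>\<^sub>q y))"
    by (rule linearI) (auto simp: qalg)
  show "bij (\<lambda>(x, y). (x, b \<cdot>\<^sub>q y))"
    by (rule bijI'[of "\<lambda>(x, y). (x, qcnj b \<cdot>\<^sub>q y)"])
      (auto simp: qalg qunit2[OF bn] qunit[OF bn])
  fix z w :: oct
  show "(\<lambda>(x, y). (x, b \<cdot>\<^sub>q y)) (z \<bullet>\<^sub>O w) = (\<lambda>(x, y). (x, b \<cdot>\<^sub>q y)) z \<bullet>\<^sub>O (\<lambda>(x, y). (x, b \<cdot>\<^sub>q y)) w"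
    by (cases z; cases w) (simp add: omult_pair qalg qunit2[OF bn] qunit[OF bn])
next
  fix x y :: quat
  show "(\<lambda>(x, y). (x, b \<cdot>\<^sub>q y)) (id x, G2 qone y) =
    (id (fst ((\<lambda>(x, y). (x, b \<cdot>\<^sub>q y)) (x, y))), G2 b (snd ((\<lambda>(x, y). (x, b \<cdot>\<^sub>q y)) (x, y))))"
    by (simp add: qT_def qalg qunit2[OF bn] qunit[OF bn])
qed

definition psi :: "oct \<Rightarrow> oct" where
  "psi z = (case z of (x, y) \<Rightarrow> (Quat (qr x) (qr y) (qi x) (- qi y), Quat (qj x) (- qj y) (qk x) (qk y)))"

lemma iso_A21_A1i: "alg_isomorphic (HH_mult id (G2 qone)) (HH_mult (F1 qunit_i) id)"
proof (rule auto_iso[where \<theta>=psi])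
  show "linear psi"
    by (rule linearI) (auto simp: psi_def plus_quat_def scaleR_quat_def)
  show "bij psi"
    by (rule bijI'[of "\<lambda>(x, y). (Quat (qr x) (qj x) (qr y) (qj y), Quat (qi x) (- qk x) (- qi y) (qk y))"])
      (auto simp: psi_def intro!: quat_eqI)
  fix z w :: oct
  show "psi (z \<bullet>\<^sub>O w) = psi z \<bullet>\<^sub>O psi w"
    by (cases z; cases w) (simp add: omult_pair psi_def; intro conjI quat_eqI; simp add: algebra_simps)
next
  fix x y :: quat
  show "psi (id x, G2 qone y) = (F1 qunit_i (fst (psi (x, y))), id (snd (psi (x, y))))"
    by (simp add: psi_def qT_def; intro conjI quat_eqI; simp add: qunit_i_def algebra_simps)
qed


lemma qcnj_scale: "qcnj (c *\<^sub>R x) = c *\<^sub>R qcnj x" by (rule quat_eqI) simp_all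

lemma exists_rot:
  assumes "a \<in> qImag" "qnorm a = 1"
  shows "\<exists>p. qnorm p = 1 \<and> a = p \<cdot>\<^sub>q qunit_i \<cdot>\<^sub>q qcnj p"
proof -
  have r: "qr a = 0" using assms(1) by (simp add: qImag_def)
  have n: "(qi a)\<^sup>2 + (qj a)\<^sup>2 + (qk a)\<^sup>2 = 1"
    using assms(2) r unfolding qnorm_def by (simp add: real_sqrt_eq_1_iff)
  show ?thesis
  proof (cases "qi a = -1")
    case True
    then have s0: "(qj a)\<^sup>2 + (qk a)\<^sup>2 = 0" using n by simp
    then have "qj a = 0" "qk a = 0"
      using sum_power2_eq_zero_iff by blast+
    then show ?thesis using True r
      by (intro exI[of _ "Quat 0 0 1 0"]) (auto simp: qnorm_def qunit_i_def intro!: quat_eqI)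
  next
    case False
    have pos: "1 + qi a > 0"
    proof -
      have "(qi a)\<^sup>2 \<le> 1" using n by (smt (verit) zero_le_power2)
      then have "\<bar>qi a\<bar> \<le> 1" by (simp add: abs_square_le_1)
      then show ?thesis using False by auto
    qed
    define m where "m = sqrt (2 * (1 + qi a))"
    have m2: "m * m = 2 * (1 + qi a)" using pos unfolding m_def by (simp add: real_sqrt_mult_self)
    have mpos: "m > 0" using pos unfolding m_def by simp
    define q where "q = Quat (1 + qi a) 0 (- qk a) (qj a)"
    define p where "p = (1 / m) *\<^sub>R q"
    have nq: "(qr q)\<^sup>2 + (qi q)\<^sup>2 + (qj q)\<^sup>2 + (qk q)\<^sup>2 = m * m"
    proof -
      have "(qr q)\<^sup>2 + (qi q)\<^sup>2 + (qj q)\<^sup>2 + (qk q)\<^sup>2 = (1 + qi a)\<^sup>2 + ((qi a)\<^sup>2 + (qj a)\<^sup>2 + (qk a)\<^sup>2) - (qi a)\<^sup>2"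
        unfolding q_def by simp
      also have "\<dots> = m * m" unfolding n m2 by (simp add: power2_eq_square algebra_simps)
      finally show ?thesis .
    qed
    have "(qr p)\<^sup>2 + (qi p)\<^sup>2 + (qj p)\<^sup>2 + (qk p)\<^sup>2 = ((qr q)\<^sup>2 + (qi q)\<^sup>2 + (qj q)\<^sup>2 + (qk q)\<^sup>2) / (m * m)"
      unfolding p_def by (simp add: power_mult_distrib power_divide power2_eq_square add_divide_distrib)
    also have "\<dots> = 1" using nq mpos by simp
    finally have pn: "qnorm p = 1" by (simp add: qnorm_def)
    have k2: "(qk a)\<^sup>2 = 1 - (qi a)\<^sup>2 - (qj a)\<^sup>2" using n by simp
    have qq: "q \<cdot>\<^sub>q qunit_i \<cdot>\<^sub>q qcnj q = (m * m) *\<^sub>R a"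
    proof (rule quat_eqI)
      show "qr (q \<cdot>\<^sub>q qunit_i \<cdot>\<^sub>q qcnj q) = qr ((m * m) *\<^sub>R a)" using r by (simp add: q_def qunit_i_def)
      show "qi (q \<cdot>\<^sub>q qunit_i \<cdot>\<^sub>q qcnj q) = qi ((m * m) *\<^sub>R a)"
      proof -
        have "qi (q \<cdot>\<^sub>q qunit_i \<cdot>\<^sub>q qcnj q) = (1 + qi a)\<^sup>2 - (qk a)\<^sup>2 - (qj a)\<^sup>2"
          by (simp add: q_def qunit_i_def power2_eq_square)
        also have "\<dots> = 2 * (1 + qi a) * qi a" unfolding k2 by (simp add: power2_eq_square algebra_simps)
        finally show ?thesis using m2 by simp
      qed
      show "qj (q \<cdot>\<^sub>q qunit_i \<cdot>\<^sub>q qcnj q) = qj ((m * m) *\<^sub>R a)"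
        using m2 by (simp add: q_def qunit_i_def algebra_simps)
      show "qk (q \<cdot>\<^sub>q qunit_i \<cdot>\<^sub>q qcnj q) = qk ((m * m) *\<^sub>R a)"
        using m2 by (simp add: q_def qunit_i_def algebra_simps)
    qed
    have "p \<cdot>\<^sub>q qunit_i \<cdot>\<^sub>q qcnj p = (1 / m) *\<^sub>R ((1 / m) *\<^sub>R (q \<cdot>\<^sub>q qunit_i \<cdot>\<^sub>q qcnj q))"
      unfolding p_def by (simp add: qscaleL qscaleR qcnj_scale)
    also have "\<dots> = a" unfolding qq using mpos by simp
    finally show ?thesis using pn by metis
  qed
qed

theorem corollary5:
  fixes a b :: quat
  assumes "a \<in> qImag" and "qnorm a = 1" and "qnorm b = 1"
  defines "A1 \<equiv> HH_mult (qT a (qcnj a) \<circ> qcnj) id"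
      and "A2 \<equiv> HH_mult id (\<lambda>y. - (qT b b \<circ> qcnj) y)"
      and "A3 \<equiv> starO_mult"
  shows "alg_isomorphic A1 A2 \<and> alg_isomorphic A2 A3 \<and> alg_isomorphic A1 A3"
proof -
  obtain p where p: "qnorm p = 1" "a = p \<cdot>\<^sub>q qunit_i \<cdot>\<^sub>q qcnj p" using exists_rot assms(1,2) by blast
  have i1: "alg_isomorphic (HH_mult (F1 qunit_i) id) A1"
    unfolding A1_def using iso_A1i_A1a[OF p] .
  have i2: "alg_isomorphic (HH_mult (F1 qunit_i) id) A2"
    unfolding A2_def using isomorphic_trans[OF isomorphic_sym[OF iso_A21_A1i] iso_A21_A2b[OF assms(3)]] .
  have i3: "alg_isomorphic (HH_mult (F1 qunit_i) id) A3"
    unfolding A3_def using isomorphic_sym[OF iso_A3_A1i] .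
  show ?thesis
    using i1 i2 i3 isomorphic_sym isomorphic_trans by metis
qed

end
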